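(* For all positive integers $n,m,k$ with $m\ge k$, every $(n,N,k,m)$-PIR array code over $\mathbb{F}_q$ satisfies $N\ge \frac{mn}{m-k+1}$; i.e. $N_P(n,k,m)\ge \frac{mn}{m-k+1}$. Consequently also $N_B(n,k,m)\ge\frac{mn}{m-k+1}$.
   Context: Fix a finite field $\mathbb{F}_q$; $[n]=\{1,\dots,n\}$. An $(n,N,k,m)$-batch array code (BAC) over $\mathbb{F}_q$ is an $\mathbb{F}_q$-linear map $\mathcal{C}:\mathbf x=(x_1,\dots,x_n)\in\mathbb{F}_q^n\mapsto(\mathbf c_1,\dots,\mathbf c_m)$ with buckets $\mathbf c_\ell\in\mathbb{F}_q^{N_\ell}$, $N_\ell\ge1$ independent of $\mathbf x$, $\sum_\ell N_\ell=N$, such that for every multiset $\{\{i_1,\dots,i_k\}\}$ of elements of $[n]$ there is a partition of $[m]$ into $k$ sets $R_1,\dots,R_k$ such that for each $j\in[k]$, $x_{i_j}$ is an $\mathbb{F}_q$-linear combination of values $f_\ell(\mathbf c_\ell)$, $\ell\in R_j$, for some linear functionals $f_\ell:\mathbb{F}_q^{N_\ell}\to\mathbb{F}_q$ (functionals and coefficients independent of $\mathbf x$); $R_j$ is then called a recovery set of $x_{i_j}$. An $(n,N,k,m)$-PIR array code is defined identically except that the requirement is imposed only for multisets of the form $\{\{i,i,\dots,i\}\}$, i.e. every $x_i$ has $k$ pairwise disjoint recovery sets partitioning $[m]$. For $k\le m$, $N_P(n,k,m)$ (resp. $N_B(n,k,m)$) is the minimum $N$ for which an $(n,N,k,m)$-PIR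 array code (resp. BAC) over $\mathbb{F}_q$ exists; clearly $N_B\ge N_P$. *)

theory Defs
  imports Complex_Main
begin

text \<open>Conventions: indices are 0-based. The message is x : nat => 'a, of which only
x 0, ..., x (n-1) matter. There are m buckets 0..m-1; bucket l has Nb l >= 1 coordinates,
coordinate t < Nb l of bucket l is the linear form  sum_{i<n} G l t i * x i
(so G describes an arbitrary F_q-linear encoding map).\<close>

definition bucket_coord :: "nat \<Rightarrow> (nat \<Rightarrow> nat \<Rightarrow> nat \<Rightarrow> 'a::field) \<Rightarrow> nat \<Rightarrow> nat \<Rightarrow> (nat \<Rightarrow> 'a) \<Rightarrow> 'a" where
  "bucket_coord n G l t x = (\<Sum>i<n. G l t i * x i)"

definition recovery_set :: "nat \<Rightarrow> (nat \<Rightarrow> nat) \<Rightarrow> (nat \<Rightarrow> nat \<Rightarrow> nat \<Rightarrow> 'a::field) \<Rightarrow> nat set \<Rightarrow> nat \<Rightarrow> bool" where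
  "recovery_set n Nb G R i \<longleftrightarrow>
     (\<exists>(f :: nat \<Rightarrow> nat \<Rightarrow> 'a) (c :: nat \<Rightarrow> 'a). \<forall>x :: nat \<Rightarrow> 'a.
        x i = (\<Sum>l\<in>R. c l * (\<Sum>t<Nb l. f l t * bucket_coord n G l t x)))"

definition is_partition :: "(nat \<Rightarrow> nat set) \<Rightarrow> nat \<Rightarrow> nat \<Rightarrow> bool" where
  "is_partition R k m \<longleftrightarrow>
     (\<Union>j<k. R j) = {..<m} \<and> (\<forall>j<k. \<forall>j'<k. j \<noteq> j' \<longrightarrow> R j \<inter> R j' = {})"

definition is_PIR_array_code :: "nat \<Rightarrow> nat \<Rightarrow> nat \<Rightarrow> (nat \<Rightarrow> nat) \<Rightarrow> (nat \<Rightarrow> nat \<Rightarrow> nat \<Rightarrow> 'a::field) \<Rightarrow> bool" where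
  "is_PIR_array_code n k m Nb G \<longleftrightarrow>
     (\<forall>l<m. 1 \<le> Nb l) \<and>
     (\<forall>i<n. \<exists>R. is_partition R k m \<and> (\<forall>j<k. recovery_set n Nb G (R j) i))"

text \<open>Batch array code: requests are arbitrary sequences (i_0,...,i_(k-1)) of indices < n,
which is the same as arbitrary multisets of size k.\<close>

definition is_batch_array_code :: "nat \<Rightarrow> nat \<Rightarrow> nat \<Rightarrow> (nat \<Rightarrow> nat) \<Rightarrow> (nat \<Rightarrow> nat \<Rightarrow> nat \<Rightarrow> 'a::field) \<Rightarrow> bool" where
  "is_batch_array_code n k m Nb G \<longleftrightarrow>
     (\<forall>l<m. 1 \<le> Nb l) \<and>
     (\<forall>req :: nat \<Rightarrow> nat. (\<forall>j<k. req j < n) \<longrightarrow>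
        (\<exists>R. is_partition R k m \<and> (\<forall>j<k. recovery_set n Nb G (R j) (req j))))"

end

theory Submission
  imports Defs "HOL-Library.FuncSet"
begin

lemma count_bound:
  fixes G :: "nat \<Rightarrow> nat \<Rightarrow> nat \<Rightarrow> 'a::{finite,field}"
  assumes rec: "\<forall>i<n. \<exists>R\<subseteq>S. recovery_set n Nb G R i" and fin: "finite S"
  shows "n \<le> (\<Sum>l\<in>S. Nb l)"
proof -
  define X where "X = PiE {..<n} (\<lambda>_. UNIV :: 'a set)"
  define I where "I = Sigma S (\<lambda>l. {..<Nb l})"
  define \<phi> where "\<phi> x = restrict (\<lambda>(l,t). bucket_coord n G l t x) I" for x
  have finI: "finite I" unfolding I_def using fin by auto
  have img: "\<phi> ` X \<subseteq> PiE I (\<lambda>_. UNIV :: 'a set)" unfolding \<phi>_def by auto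
  have inj: "inj_on \<phi> X"
  proof (rule inj_onI)
    fix x y assume x: "x \<in> X" and y: "y \<in> X" and e: "\<phi> x = \<phi> y"
    show "x = y"
    proof
      fix i
      show "x i = y i"
      proof (cases "i < n")
        case True
        then obtain R where RS: "R \<subseteq> S" and r: "recovery_set n Nb G R i" using rec by auto
        then obtain f c where fc: "\<forall>x :: nat \<Rightarrow> 'a.
          x i = (\<Sum>l\<in>R. c l * (\<Sum>t<Nb l. f l t * bucket_coord n G l t x))"
          unfolding recovery_set_def by blast
        have co: "bucket_coord n G l t x = bucket_coord n G l t y" if "l \<in> R" "t < Nb l" for l t
        proof -
          have "(l,t) \<in> I" unfolding I_def using that RS by auto
          then show ?thesis using fun_cong[OF e, of "(l,t)"] unfolding \<phi>_def by auto
        qed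
        have "x i = (\<Sum>l\<in>R. c l * (\<Sum>t<Nb l. f l t * bucket_coord n G l t x))" using fc by blast
        also have "\<dots> = (\<Sum>l\<in>R. c l * (\<Sum>t<Nb l. f l t * bucket_coord n G l t y))"
          using co by (intro sum.cong refl arg_cong2[where f="(*)"] ) auto
        also have "\<dots> = y i" using fc by metis
        finally show ?thesis .
      next
        case False
        then show ?thesis using x y unfolding X_def by (auto simp: PiE_def extensional_def)
      qed
    qed
  qed
  have "card X \<le> card (PiE I (\<lambda>_. UNIV :: 'a set))"
    using card_inj_on_le[OF inj img] finI by (simp add: finite_PiE)
  moreover have "card X = card (UNIV::'a set) ^ n" unfolding X_def by (simp add: card_PiE)
  moreover have "card (PiE I (\<lambda>_. UNIV :: 'a set)) = card (UNIV::'a set) ^ card I"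
    using finI by (simp add: card_PiE)
  moreover have "card I = (\<Sum>l\<in>S. Nb l)" unfolding I_def using fin by (simp add: card_SigmaI)
  moreover have "1 < card (UNIV::'a set)"
  proof -
    have "card {0::'a, 1} \<le> card (UNIV::'a set)" by (rule card_mono) auto
    then show ?thesis by simp
  qed
  ultimately show ?thesis using power_le_imp_le_exp by metis
qed

lemma pigeon:
  assumes P: "is_partition R k m" and S: "S \<subseteq> {..<m}" and c: "card ({..<m} - S) < k"
  shows "\<exists>j<k. R j \<subseteq> S"
proof (rule ccontr)
  define T where "T = {..<m} - S"
  assume nt: "\<not> ?thesis"
  have U: "\<And>j. j < k \<Longrightarrow> R j \<subseteq> {..<m}" using P unfolding is_partition_def by blast
  have D: "\<And>j j'. j < k \<Longrightarrow> j' < k \<Longrightarrow> j \<noteq> j' \<Longrightarrow> R j \<inter> R j' = {}"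
    using P unfolding is_partition_def by blast
  have ex: "\<exists>g. g \<in> R j \<inter> T" if j: "j < k" for j
  proof -
    have "\<not> R j \<subseteq> S" using nt j by blast
    then obtain g where "g \<in> R j" "g \<notin> S" by blast
    then have "g \<in> R j \<inter> T" using U[OF j] unfolding T_def by blast
    then show ?thesis by blast
  qed
  define g where "g j = (SOME x. x \<in> R j \<inter> T)" for j
  have g: "g j \<in> R j \<inter> T" if "j < k" for j
    unfolding g_def using ex[OF that] by (rule someI_ex)
  have "inj_on g {..<k}"
  proof (rule inj_onI)
    fix a b assume a: "a \<in> {..<k}" and b: "b \<in> {..<k}" and e: "g a = g b"
    show "a = b"
    proof (rule ccontr)
      assume "a \<noteq> b"
      then have "R a \<inter> R b = {}" using D a b by simp
      moreover have "g a \<in> R a" using g a by blast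
      moreover have "g a \<in> R b" using g[of b] b e by auto
      ultimately show False by blast
    qed
  qed
  moreover have "g ` {..<k} \<subseteq> T" using g by auto
  moreover have "finite T" unfolding T_def by simp
  ultimately have "k \<le> card T" using card_inj_on_le[of g "{..<k}" T] by simp
  then show False using c T_def by simp
qed

lemma shift_bij:
  assumes "0 < (m::nat)"
  shows "bij_betw (\<lambda>s. (s + d) mod m) {..<m} {..<m}"
proof -
  have sur: "(\<lambda>s. (s + d) mod m) ` {..<m} = {..<m}"
  proof
    show "(\<lambda>s. (s + d) mod m) ` {..<m} \<subseteq> {..<m}" using assms by auto
    show "{..<m} \<subseteq> (\<lambda>s. (s + d) mod m) ` {..<m}"
    proof
      fix l assume l: "l \<in> {..<m}"
      define s where "s = (l + m - d mod m) mod m"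
      have "(s + d) mod m = (l + m - d mod m + d) mod m" unfolding s_def by (simp add: mod_add_left_eq)
      also have "\<dots> = (l + m - d mod m + d mod m) mod m" by (simp add: mod_add_right_eq)
      also have "\<dots> = l"
      proof -
        have "d mod m < m" using assms by simp
        then have "d mod m \<le> l + m" by linarith
        then show ?thesis using l by simp
      qed
      finally have "(s + d) mod m = l" .
      moreover have "s < m" unfolding s_def using assms by simp
      ultimately show "l \<in> (\<lambda>s. (s + d) mod m) ` {..<m}" by (metis image_eqI lessThan_iff)
    qed
  qed
  then have "inj_on (\<lambda>s. (s + d) mod m) {..<m}" by (simp add: eq_card_imp_inj_on)
  then show ?thesis using sur by (simp add: bij_betw_def)
qed

lemma main_PIR:
  fixes G :: "nat \<Rightarrow> nat \<Rightarrow> nat \<Rightarrow> 'a::{finite,field}"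
  assumes "0 < n" and "0 < k" and "0 < m" and "k \<le> m"
    and code: "is_PIR_array_code n k m Nb G"
  shows "real m * real n / real (m - k + 1) \<le> real (\<Sum>l<m. Nb l)"
proof -
  define w where "w = m - k + 1"
  have w: "0 < w" "w \<le> m" using assms unfolding w_def by auto
  have win: "n \<le> (\<Sum>d<w. Nb ((s + d) mod m))" if s: "s < m" for s
  proof -
    define S where "S = (\<lambda>d. (s + d) mod m) ` {..<w}"
    have Sm: "S \<subseteq> {..<m}" unfolding S_def using assms by auto
    have sub: "{..<m} - S \<subseteq> (\<lambda>d. (s + d) mod m) ` {w..<m}"
    proof
      fix l assume l: "l \<in> {..<m} - S"
      define d where "d = (l + m - s) mod m"
      have dm: "d < m" unfolding d_def using assms by auto
      have "(s + d) mod m = (s + (l + m - s)) mod m" unfolding d_def by (simp add: mod_add_right_eq)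
      also have "\<dots> = l" using l s by simp
      finally have e: "(s + d) mod m = l" .
      then have "d \<notin> {..<w}" using l unfolding S_def by auto
      then show "l \<in> (\<lambda>d. (s + d) mod m) ` {w..<m}" using e dm by force
    qed
    have "card ({..<m} - S) \<le> card ((\<lambda>d. (s + d) mod m) ` {w..<m})"
      by (rule card_mono[OF _ sub]) auto
    also have "\<dots> \<le> m - w" using card_image_le[of "{w..<m}"] by simp
    finally have cT: "card ({..<m} - S) < k" using w assms unfolding w_def by linarith
    have "\<forall>i<n. \<exists>R\<subseteq>S. recovery_set n Nb G R i"
    proof (intro allI impI)
      fix i assume "i < n"
      then obtain R where P: "is_partition R k m" and r: "\<forall>j<k. recovery_set n Nb G (R j) i"
        using code unfolding is_PIR_array_code_def by blast
      obtain j where "j < k" "R j \<subseteq> S" using pigeon[OF P Sm cT] by blast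
      then show "\<exists>R\<subseteq>S. recovery_set n Nb G R i" using r by blast
    qed
    then have "n \<le> (\<Sum>l\<in>S. Nb l)" using count_bound[of n S Nb G] unfolding S_def by auto
    also have "\<dots> \<le> (\<Sum>d<w. Nb ((s + d) mod m))" unfolding S_def
      using sum_image_le[of "{..<w}" Nb "\<lambda>d. (s+d) mod m"] by (simp add: o_def)
    finally show ?thesis .
  qed
  have "m * n \<le> (\<Sum>s<m. \<Sum>d<w. Nb ((s + d) mod m))"
    using sum_mono[of "{..<m}" "\<lambda>_. n", OF win] by simp
  also have "\<dots> = (\<Sum>d<w. \<Sum>s<m. Nb ((s + d) mod m))" by (rule sum.swap)
  also have "\<dots> = (\<Sum>d<w. \<Sum>l<m. Nb l)"
    using sum.reindex_bij_betw[OF shift_bij[OF assms(3)], of Nb] by simp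
  also have "\<dots> = w * (\<Sum>l<m. Nb l)" by simp
  finally have "real m * real n \<le> real w * real (\<Sum>l<m. Nb l)" by (metis of_nat_le_iff of_nat_mult)
  then show ?thesis using w unfolding w_def[symmetric] by (simp add: divide_le_eq mult.commute)
qed

theorem theorem3p1:
  fixes n k m :: nat
  assumes "0 < n" and "0 < k" and "0 < m" and "k \<le> m"
  shows "(\<forall>(Nb :: nat \<Rightarrow> nat) (G :: nat \<Rightarrow> nat \<Rightarrow> nat \<Rightarrow> 'a::{finite,field}).
            is_PIR_array_code n k m Nb G \<longrightarrow>
            real m * real n / real (m - k + 1) \<le> real (\<Sum>l<m. Nb l))
       \<and> (\<forall>(Nb :: nat \<Rightarrow> nat) (G :: nat \<Rightarrow> nat \<Rightarrow> nat \<Rightarrow> 'a::{finite,field}).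
            is_batch_array_code n k m Nb G \<longrightarrow>
            real m * real n / real (m - k + 1) \<le> real (\<Sum>l<m. Nb l))"
proof (intro conjI allI impI)
  fix Nb and G :: "nat \<Rightarrow> nat \<Rightarrow> nat \<Rightarrow> 'a::{finite,field}"
  assume "is_PIR_array_code n k m Nb G"
  then show "real m * real n / real (m - k + 1) \<le> real (\<Sum>l<m. Nb l)"
    using main_PIR assms by blast
next
  fix Nb and G :: "nat \<Rightarrow> nat \<Rightarrow> nat \<Rightarrow> 'a::{finite,field}"
  assume b: "is_batch_array_code n k m Nb G"
  have "is_PIR_array_code n k m Nb G"
    unfolding is_PIR_array_code_def
  proof (intro conjI)
    show "\<forall>l<m. 1 \<le> Nb l" using b unfolding is_batch_array_code_def by blast
    show "\<forall>i<n. \<exists>R. is_partition R k m \<and> (\<forall>j<k. recovery_set n Nb G (R j) i)"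
    proof (intro allI impI)
      fix i assume i: "i < n"
      have "\<forall>j<k. (\<lambda>_. i) j < n" using i by simp
      have all: "\<forall>req :: nat \<Rightarrow> nat. (\<forall>j<k. req j < n) \<longrightarrow>
        (\<exists>R. is_partition R k m \<and> (\<forall>j<k. recovery_set n Nb G (R j) (req j)))"
        using b unfolding is_batch_array_code_def by blast
      show "\<exists>R. is_partition R k m \<and> (\<forall>j<k. recovery_set n Nb G (R j) i)"
        using all[rule_format, of "\<lambda>_. i"] i by simp
    qed
  qed
  then show "real m * real n / real (m - k + 1) \<le> real (\<Sum>l<m. Nb l)"
    using main_PIR assms by blast
qed

end
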